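(* Let $a\in\mathbb F^*$ and let $g,h\in\mathcal R$ satisfy $x^n-a=hg$, where $\deg(h)=k$. Let $g_0$ be the constant coefficient of $g$, let $c=\gamma(a,g)$, and set $\widehat g^{r}=\rho_r(\theta^n(g))$ and $\widehat h^{l}=\rho_l(\theta^{-n}(h))$. Then: (1) $M_a^\theta(\overline g)^{\mathsf T}=M_{c^{-1}}^\theta(\overline{g^\#})$, where $g^\#=a\,\widehat g^{r}x^k-c\,g_0\,(x^n-c^{-1})$; (2) $M_c^\theta(\overline{x^k})\,M_a^\theta(\overline g)=M^\theta_{\theta^k(c^{-1})}(\overline{a\widehat g^{r}})^{\mathsf T}$; (3) $M^\theta_{\theta^{k-n}(c^{-1})}(\overline{x^{n-k}})\,M^\theta_{a^{-1}}(\overline{\widehat h^{l}})=M^\theta_c(\overline{a^{-1}h})^{\mathsf T}$.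
   Context: $\mathbb F$ is a finite field, $\theta\in\mathrm{Aut}(\mathbb F)$, and $\mathcal R=\mathbb F[x;\theta]$ is the skew polynomial ring: its elements are $\sum_i f_ix^i$ with $f_i\in\mathbb F$ (coefficients written on the left), with the usual addition and multiplication determined by $xb=\theta(b)x$ for $b\in\mathbb F$ together with associativity and distributivity. Fix $n\in\mathbb N$. For $b\in\mathbb F^*$, $\mathcal S_b=\mathcal R/\mathcal R(x^n-b)$ is the quotient left $\mathcal R$-module; $\overline f$ denotes the coset of $f\in\mathcal R$, and in an expression $M^\theta_b(\overline f)$ the coset is always taken in $\mathcal S_b$. The map $\mathfrak p_b:\mathbb F^n\to\mathcal S_b$, $(c_0,\dots,c_{n-1})\mapsto\overline{\sum_{i=0}^{n-1}c_ix^i}$ is a left $\mathbb F$-linear isomorphism and $\mathfrak v_b=\mathfrak p_b^{-1}$. The $(\theta,b)$-circulant of $\overline f\in\mathcal S_b$ is the $n\times n$ matrix $M^\theta_b(\overline f)$ whose row with index $i$ ($i=0,\dots,n-1$) is $\mathfrak v_b(\overline{x^if})$. The automorphism $\theta$ (and its integer powers $\theta^m$) is extended to $\mathcal R$ coefficientwise: $\theta^m(\sum f_ix^i)=\sum\theta^m(f_i)x^i$. For a right divisor $g=\sum g_ix^i$ of $x^n-a$ (so $g_0\neq0$) one sets $\gamma(a,g)=a\,g_0^{-1}\theta^n(g_0)$. For nonzero $f=\sum_{i=0}^tf_ix^i$ with $f_t\ne0$ the left and right reciprocals are $\rho_l(f)=\sum_{i=0}^t\theta^i(f_{t-i})x^i$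 and $\rho_r(f)=\sum_{i=0}^t\theta^{i-t}(f_{t-i})x^i$. *)

theory Defs
  imports "HOL-Computational_Algebra.Polynomial" "Jordan_Normal_Form.Matrix"
begin

text \<open>Skew polynomials F[x;theta] are represented by their coefficient sequences,
  using the additive structure of the type 'a poly (coefficients on the left).
  Multiplication is the skew multiplication determined by x b = theta(b) x.\<close>

definition field_automorphism :: "('a::field \<Rightarrow> 'a) \<Rightarrow> bool" where
  "field_automorphism \<theta> \<longleftrightarrow> bij \<theta> \<and> (\<forall>x y. \<theta> (x + y) = \<theta> x + \<theta> y)
     \<and> (\<forall>x y. \<theta> (x * y) = \<theta> x * \<theta> y) \<and> \<theta> 1 = 1"

definition theta_pow :: "('a \<Rightarrow> 'a) \<Rightarrow> int \<Rightarrow> 'a \<Rightarrow> 'a" where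
  "theta_pow \<theta> m = (if m \<ge> 0 then \<theta> ^^ nat m else (inv_into UNIV \<theta>) ^^ nat (- m))"

definition skew_mult :: "('a::field \<Rightarrow> 'a) \<Rightarrow> 'a poly \<Rightarrow> 'a poly \<Rightarrow> 'a poly" where
  "skew_mult \<theta> f g = (\<Sum>i\<le>degree f. \<Sum>j\<le>degree g. monom (coeff f i * (\<theta> ^^ i) (coeff g j)) (i + j))"

abbreviation xpow :: "nat \<Rightarrow> 'a::field poly" where
  "xpow i \<equiv> monom 1 i"

text \<open>Representative of the coset of f in S_b = R / R(x^n - b): the unique r of degree < n
  with f - r in the left ideal R(x^n - b).  Its coefficients 0..n-1 form v_b(coset of f).\<close>
definition skew_rem :: "('a::field \<Rightarrow> 'a) \<Rightarrow> nat \<Rightarrow> 'a \<Rightarrow> 'a poly \<Rightarrow> 'a poly" where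
  "skew_rem \<theta> n b f = (THE r. degree r < n \<and> (\<exists>q. f = skew_mult \<theta> q (xpow n - [:b:]) + r))"

definition circulant :: "('a::field \<Rightarrow> 'a) \<Rightarrow> nat \<Rightarrow> 'a \<Rightarrow> 'a poly \<Rightarrow> 'a mat" where
  "circulant \<theta> n b f = mat n n (\<lambda>(i, j). coeff (skew_rem \<theta> n b (skew_mult \<theta> (xpow i) f)) j)"

definition theta_poly :: "('a::field \<Rightarrow> 'a) \<Rightarrow> int \<Rightarrow> 'a poly \<Rightarrow> 'a poly" where
  "theta_poly \<theta> m f = map_poly (theta_pow \<theta> m) f"

definition gamma :: "('a::field \<Rightarrow> 'a) \<Rightarrow> nat \<Rightarrow> 'a \<Rightarrow> 'a poly \<Rightarrow> 'a" where
  "gamma \<theta> n a g = a * inverse (coeff g 0) * (\<theta> ^^ n) (coeff g 0)"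

definition rho_l :: "('a::field \<Rightarrow> 'a) \<Rightarrow> 'a poly \<Rightarrow> 'a poly" where
  "rho_l \<theta> f = (\<Sum>i\<le>degree f. monom ((\<theta> ^^ i) (coeff f (degree f - i))) i)"

definition rho_r :: "('a::field \<Rightarrow> 'a) \<Rightarrow> 'a poly \<Rightarrow> 'a poly" where
  "rho_r \<theta> f = (\<Sum>i\<le>degree f. monom (theta_pow \<theta> (int i - int (degree f)) (coeff f (degree f - i))) i)"

end

theory Submission
  imports Defs
begin

context
  fixes \<theta> :: "'a::field \<Rightarrow> 'a"
  assumes aut: "field_automorphism \<theta>"
begin

lemma th_add: "\<theta> (x+y) = \<theta> x + \<theta> y" using aut by (simp add: field_automorphism_def)
lemma th_mult: "\<theta> (x*y) = \<theta> x * \<theta> y" using aut by (simp add: field_automorphism_def)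
lemma th_one: "\<theta> 1 = 1" using aut by (simp add: field_automorphism_def)
lemma th_bij: "bij \<theta>" using aut by (simp add: field_automorphism_def)
lemma th_zero: "\<theta> 0 = 0"
proof -
  have "\<theta> 0 + \<theta> 0 = \<theta> 0 + 0" using th_add[of 0 0] by simp
  then show ?thesis by (rule add_left_imp_eq)
qed

lemma thp_add: "(\<theta>^^i) (x+y) = (\<theta>^^i) x + (\<theta>^^i) y"
  by (induction i) (auto simp: th_add)
lemma thp_mult: "(\<theta>^^i) (x*y) = (\<theta>^^i) x * (\<theta>^^i) y"
  by (induction i) (auto simp: th_mult)
lemma thp_one: "(\<theta>^^i) 1 = 1"
  by (induction i) (auto simp: th_one)
lemma thp_zero: "(\<theta>^^i) 0 = 0"
  by (induction i) (auto simp: th_zero)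
lemma thp_minus: "(\<theta>^^i) (-x) = - (\<theta>^^i) x"
  using thp_add[of i x "-x"] thp_zero[of i] by (simp add: eq_neg_iff_add_eq_0 add.commute)
lemma thp_diff: "(\<theta>^^i) (x-y) = (\<theta>^^i) x - (\<theta>^^i) y"
  using thp_add[of i x "-y"] thp_minus[of i y] by simp
lemma thp_inj: "inj (\<theta>^^i)"
  using th_bij by (simp add: bij_is_inj inj_fn)
lemma thp_eq_iff: "(\<theta>^^i) x = (\<theta>^^i) y \<longleftrightarrow> x = y"
  using thp_inj by (meson injD)
lemma thp_eq0_iff: "(\<theta>^^i) x = 0 \<longleftrightarrow> x = 0"
  using thp_eq_iff[of i x 0] thp_zero by simp
lemma thp_inverse: "(\<theta>^^i) (inverse x) = inverse ((\<theta>^^i) x)"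
proof (cases "x = 0")
  case True then show ?thesis by (simp add: thp_zero)
next
  case False
  have "(\<theta>^^i) x * (\<theta>^^i) (inverse x) = 1" using thp_mult[of i x "inverse x"] False by (simp add: thp_one)
  then show ?thesis by (metis inverse_unique)
qed
lemma thp_sum: "(\<theta>^^i) (sum f S) = sum (\<lambda>x. (\<theta>^^i) (f x)) S"
  by (induction S rule: infinite_finite_induct) (auto simp: thp_zero thp_add)
lemma thp_thp: "(\<theta>^^i) ((\<theta>^^j) x) = (\<theta>^^(i+j)) x"
  by (simp add: funpow_add)

lemma coeff_skew: "coeff (skew_mult \<theta> f g) m = (\<Sum>i\<le>m. coeff f i * (\<theta>^^i) (coeff g (m-i)))"
proof -
  have inner: "(\<Sum>j\<le>degree g. if i + j = m then coeff f i * (\<theta>^^i) (coeff g j) else 0)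
      = (if i \<le> m then coeff f i * (\<theta>^^i) (coeff g (m-i)) else 0)" for i
  proof (cases "i \<le> m")
    case True
    have "(\<Sum>j\<le>degree g. if i + j = m then coeff f i * (\<theta>^^i) (coeff g j) else 0)
        = (\<Sum>j\<le>degree g. if j = m - i then coeff f i * (\<theta>^^i) (coeff g j) else 0)"
      using True by (intro sum.cong) auto
    also have "\<dots> = (if m - i \<le> degree g then coeff f i * (\<theta>^^i) (coeff g (m-i)) else 0)"
      by (simp add: sum.delta')
    also have "\<dots> = coeff f i * (\<theta>^^i) (coeff g (m-i))"
      by (auto simp: coeff_eq_0 thp_zero)
    finally show ?thesis using True by simp
  qed auto
  have "coeff (skew_mult \<theta> f g) m = (\<Sum>i\<le>degree f. \<Sum>j\<le>degree g. if i + j = m then coeff f i * (\<theta>^^i) (coeff g j) else 0)"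
    by (simp add: skew_mult_def coeff_sum coeff_monom)
  also have "\<dots> = (\<Sum>i\<le>degree f. if i \<le> m then coeff f i * (\<theta>^^i) (coeff g (m-i)) else 0)"
    using inner by simp
  also have "\<dots> = (\<Sum>i\<le>m. coeff f i * (\<theta>^^i) (coeff g (m-i)))"
  proof -
    have "(\<Sum>i\<le>degree f. if i \<le> m then coeff f i * (\<theta>^^i) (coeff g (m-i)) else 0)
       = (\<Sum>i\<le>degree f + m. if i \<le> m then coeff f i * (\<theta>^^i) (coeff g (m-i)) else 0)"
      by (intro sum.mono_neutral_left) (auto simp: coeff_eq_0)
    also have "\<dots> = (\<Sum>i\<le>m. coeff f i * (\<theta>^^i) (coeff g (m-i)))"
    proof -
      have "{i\<in>{..degree f + m}. i \<le> m} = {..m}" by auto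
      then show ?thesis by (simp add: sum.inter_filter[symmetric])
    qed
    finally show ?thesis .
  qed
  finally show ?thesis .
qed

lemma skew_assoc: "skew_mult \<theta> (skew_mult \<theta> f g) h = skew_mult \<theta> f (skew_mult \<theta> g h)"
proof (rule poly_eqI)
  fix m
  define G where "G i j = coeff f i * (\<theta>^^i) (coeff g j) * (\<theta>^^(i+j)) (coeff h (m - i - j))" for i j
  have "coeff (skew_mult \<theta> (skew_mult \<theta> f g) h) m
      = (\<Sum>p\<le>m. (\<Sum>i\<le>p. coeff f i * (\<theta>^^i) (coeff g (p-i))) * (\<theta>^^p) (coeff h (m-p)))"
    by (simp add: coeff_skew)
  also have "\<dots> = (\<Sum>p\<le>m. \<Sum>i\<le>p. G i (p - i))"
    by (auto simp: G_def sum_distrib_right intro!: sum.cong)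
  also have "\<dots> = (\<Sum>(i,j)\<in>{(i,j). i+j \<le> m}. G i j)"
    by (rule sum.triangle_reindex_eq[symmetric])
  also have "{(i,j). i+j \<le> m} = (SIGMA i:{..m}. {..m-i})" by auto
  also have "(\<Sum>(i,j)\<in>(SIGMA i:{..m}. {..m-i}). G i j) = (\<Sum>i\<le>m. \<Sum>j\<le>m-i. G i j)"
    by (rule sum.Sigma[symmetric]) auto
  also have "\<dots> = coeff (skew_mult \<theta> f (skew_mult \<theta> g h)) m"
    by (auto simp: coeff_skew G_def sum_distrib_left thp_sum thp_mult thp_thp diff_diff_add mult.assoc intro!: sum.cong)
  finally show "coeff (skew_mult \<theta> (skew_mult \<theta> f g) h) m = coeff (skew_mult \<theta> f (skew_mult \<theta> g h)) m" .
qed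


lemma skew_add_left: "skew_mult \<theta> (f+g) h = skew_mult \<theta> f h + skew_mult \<theta> g h"
  by (rule poly_eqI) (simp add: coeff_skew sum.distrib distrib_right)
lemma skew_add_right: "skew_mult \<theta> f (g+h) = skew_mult \<theta> f g + skew_mult \<theta> f h"
  by (rule poly_eqI) (simp add: coeff_skew sum.distrib distrib_left thp_add)
lemma skew_diff_left: "skew_mult \<theta> (f-g) h = skew_mult \<theta> f h - skew_mult \<theta> g h"
  by (rule poly_eqI) (simp add: coeff_skew sum_subtractf left_diff_distrib)
lemma skew_diff_right: "skew_mult \<theta> f (g-h) = skew_mult \<theta> f g - skew_mult \<theta> f h"
  by (rule poly_eqI) (simp add: coeff_skew sum_subtractf right_diff_distrib thp_diff)
lemma skew_smult_left: "skew_mult \<theta> (Polynomial.smult c f) g = Polynomial.smult c (skew_mult \<theta> f g)"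
  by (rule poly_eqI) (simp add: coeff_skew sum_distrib_left mult.assoc)
lemma skew_zero_left: "skew_mult \<theta> 0 g = 0"
  by (rule poly_eqI) (simp add: coeff_skew)
lemma skew_zero_right: "skew_mult \<theta> f 0 = 0"
  by (rule poly_eqI) (simp add: coeff_skew thp_zero)

lemma coeff_const1: "coeff [:c:] i = (if i = 0 then c else 0)" by (cases i) auto

lemma coeff_skew_const_left: "coeff (skew_mult \<theta> [:c:] g) m = c * coeff g m"
proof -
  have "coeff (skew_mult \<theta> [:c:] g) m = (\<Sum>i\<le>m. if i = 0 then c * (\<theta>^^i) (coeff g (m-i)) else 0)"
    unfolding coeff_skew by (intro sum.cong) (auto simp: coeff_const1)
  then show ?thesis by (simp add: sum.delta)
qed
lemma skew_const_left: "skew_mult \<theta> [:c:] g = Polynomial.smult c g"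
  by (rule poly_eqI) (simp add: coeff_skew_const_left)

lemma coeff_skew_const_right: "coeff (skew_mult \<theta> f [:c:]) m = coeff f m * (\<theta>^^m) c"
proof -
  have "coeff (skew_mult \<theta> f [:c:]) m = (\<Sum>i\<le>m. if i = m then coeff f i * (\<theta>^^i) c else 0)"
    unfolding coeff_skew by (intro sum.cong) (auto simp: coeff_const1 thp_zero)
  then show ?thesis by (simp add: sum.delta)
qed

lemma coeff_skew_xpow_right: "coeff (skew_mult \<theta> f (xpow k)) m = (if k \<le> m then coeff f (m-k) else 0)"
proof -
  have "coeff (skew_mult \<theta> f (xpow k)) m = (\<Sum>i\<le>m. if i = m - k \<and> k \<le> m then coeff f i else 0)"
    unfolding coeff_skew by (intro sum.cong) (auto simp: coeff_monom thp_zero thp_one)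
  then show ?thesis by (auto simp: sum.delta)
qed

lemma coeff_skew_xpow_left: "coeff (skew_mult \<theta> (xpow k) f) m = (if k \<le> m then (\<theta>^^k) (coeff f (m-k)) else 0)"
proof -
  have "coeff (skew_mult \<theta> (xpow k) f) m = (\<Sum>i\<le>m. if i = k \<and> k \<le> m then (\<theta>^^k) (coeff f (m-k)) else 0)"
    unfolding coeff_skew by (intro sum.cong) (auto simp: coeff_monom)
  then show ?thesis by (auto simp: sum.delta)
qed

lemma coeff_skew_high: "m > degree f + degree g \<Longrightarrow> coeff (skew_mult \<theta> f g) m = 0"
  unfolding coeff_skew
proof (intro sum.neutral ballI)
  fix i assume "m > degree f + degree g" "i \<in> {..m}"
  then show "coeff f i * (\<theta> ^^ i) (coeff g (m - i)) = 0"
    by (cases "i \<le> degree f") (auto simp: coeff_eq_0 thp_zero)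
qed

lemma coeff_skew_top: "coeff (skew_mult \<theta> f g) (degree f + degree g) = lead_coeff f * (\<theta>^^degree f) (lead_coeff g)"
proof -
  have "coeff (skew_mult \<theta> f g) (degree f + degree g) =
     (\<Sum>i\<le>degree f + degree g. if i = degree f then coeff f i * (\<theta>^^i) (coeff g (degree f + degree g - i)) else 0)"
    unfolding coeff_skew
  proof (intro sum.cong refl)
    fix i assume "i \<in> {..degree f + degree g}"
    show "coeff f i * (\<theta> ^^ i) (coeff g (degree f + degree g - i)) =
      (if i = degree f then coeff f i * (\<theta> ^^ i) (coeff g (degree f + degree g - i)) else 0)"
    proof (cases "i < degree f")
      case True then show ?thesis by (auto simp: coeff_eq_0 thp_zero)
    next
      case False then show ?thesis by (cases "i = degree f") (auto simp: coeff_eq_0)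
    qed
  qed
  then show ?thesis by (simp add: sum.delta)
qed

lemma degree_skew: "f \<noteq> 0 \<Longrightarrow> g \<noteq> 0 \<Longrightarrow> degree (skew_mult \<theta> f g) = degree f + degree g"
  by (rule antisym, rule degree_le) (auto intro!: le_degree simp: coeff_skew_top coeff_skew_high thp_eq0_iff)

lemma skew_nonzero: "f \<noteq> 0 \<Longrightarrow> g \<noteq> 0 \<Longrightarrow> skew_mult \<theta> f g \<noteq> 0"
  using coeff_skew_top[of f g] by (auto simp: thp_eq0_iff)

lemma map_skew: "map_poly (\<theta>^^n) (skew_mult \<theta> p q) = skew_mult \<theta> (map_poly (\<theta>^^n) p) (map_poly (\<theta>^^n) q)"
  by (rule poly_eqI) (simp add: coeff_map_poly thp_zero coeff_skew thp_sum thp_mult thp_thp add.commute)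


lemma th_inv1: "\<theta> (inv_into UNIV \<theta> x) = x" using th_bij by (simp add: bij_is_surj surj_f_inv_f)
lemma th_inv2: "inv_into UNIV \<theta> (\<theta> x) = x" using th_bij by (simp add: bij_is_inj inv_f_f)
lemma thp_invp1: "(\<theta>^^m) ((inv_into UNIV \<theta>^^m) x) = x"
  using fn_o_inv_fn_is_id[OF th_bij, of m] by (metis comp_apply)
lemma thp_invp2: "(inv_into UNIV \<theta>^^m) ((\<theta>^^m) x) = x"
  using inv_fn_o_fn_is_id[OF th_bij, of m] by (metis comp_apply)
lemma tp_nat: "theta_pow \<theta> (int m) = \<theta>^^m" by (simp add: theta_pow_def)
lemma tp_neg: "theta_pow \<theta> (- int m) = inv_into UNIV \<theta>^^m"
  by (cases "m = 0") (auto simp: theta_pow_def)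
lemma tp_comp: assumes "m + int j \<ge> 0" shows "theta_pow \<theta> m ((\<theta>^^j) x) = (\<theta>^^nat(m + int j)) x"
proof (cases "m \<ge> 0")
  case True then show ?thesis by (simp add: theta_pow_def thp_thp nat_add_distrib)
next
  case False
  define p where "p = nat (-m)"
  have j: "j = p + nat (m + int j)" using False assms p_def by linarith
  have "theta_pow \<theta> m ((\<theta>^^j) x) = (inv_into UNIV \<theta>^^p) ((\<theta>^^p) ((\<theta>^^nat (m + int j)) x))"
  proof -
    have e: "(\<theta>^^j) x = (\<theta>^^p) ((\<theta>^^nat (m + int j)) x)"
      unfolding thp_thp by (rule arg_cong[OF j, of "\<lambda>t. (\<theta>^^t) x"])
    show ?thesis using False by (simp add: theta_pow_def p_def e)
  qed
  then show ?thesis by (simp add: thp_invp2)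
qed

lemma degree_X: "0 < n \<Longrightarrow> degree (xpow n - [:b:] :: 'a poly) = n"
  by (rule antisym, rule degree_le) (auto intro!: le_degree simp: coeff_const1)

lemma skew_rem_eq:
  assumes n: "0 < n" and r: "degree r < n" and f: "f = skew_mult \<theta> q (xpow n - [:b:]) + r"
  shows "skew_rem \<theta> n b f = r"
  unfolding skew_rem_def
proof (rule the_equality)
  show "degree r < n \<and> (\<exists>q. f = skew_mult \<theta> q (xpow n - [:b:]) + r)" using r f by blast
next
  fix r' assume "degree r' < n \<and> (\<exists>q. f = skew_mult \<theta> q (xpow n - [:b:]) + r')"
  then obtain q' where r': "degree r' < n" and f': "f = skew_mult \<theta> q' (xpow n - [:b:]) + r'" by blast
  have eq: "skew_mult \<theta> (q - q') (xpow n - [:b:]) = r' - r"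
    using f f' by (simp add: skew_diff_left algebra_simps)
  have X0: "xpow n - [:b:] \<noteq> (0::'a poly)" using degree_X[OF n, of b] n by auto
  show "r' = r"
  proof (cases "q = q'")
    case True then show ?thesis using eq by (simp add: skew_zero_left)
  next
    case False
    have "degree (skew_mult \<theta> (q - q') (xpow n - [:b:])) \<ge> n"
      using degree_skew[of "q - q'" "xpow n - [:b:]"] False X0 degree_X[OF n] by simp
    moreover have "degree (r' - r) < n" using r r' degree_diff_le_max[of r' r] by linarith
    ultimately show ?thesis using eq by simp
  qed
qed

lemma coeff_sum_monom: "coeff (\<Sum>s<n. monom (F s) s) m = (if m < n then F m else 0)"
  by (simp add: coeff_sum coeff_monom sum.delta)

lemma circ_entry:
  assumes n: "0 < n" and df: "degree f \<le> n" and i: "i < n" and l: "l < n"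
  shows "circulant \<theta> n b f $$ (i,l) = (if i \<le> l then (\<theta>^^i) (coeff f (l-i)) else 0) + (\<theta>^^l) b * (\<theta>^^i) (coeff f (n+l-i))"
proof -
  define R where "R m = (if i \<le> m then (\<theta>^^i) (coeff f (m-i)) else 0) + (\<theta>^^m) b * (\<theta>^^i) (coeff f (n+m-i))" for m
  define q where "q = (\<Sum>s<n. monom ((\<theta>^^i) (coeff f (n+s-i))) s)"
  define r where "r = (\<Sum>s<n. monom (R s) s)"
  have dr: "degree r < n"
    using n by (intro degree_lessI) (auto simp: r_def coeff_sum_monom)
  have "skew_mult \<theta> (xpow i) f = skew_mult \<theta> q (xpow n - [:b:]) + r"
  proof (rule poly_eqI)
    fix m
    show "coeff (skew_mult \<theta> (xpow i) f) m = coeff (skew_mult \<theta> q (xpow n - [:b:]) + r) m"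
    proof (cases "m < n")
      case True
      then show ?thesis
        by (simp add: coeff_skew_xpow_left skew_diff_right coeff_skew_xpow_right coeff_skew_const_right
            q_def r_def coeff_sum_monom R_def)
    next
      case False
      have A: "coeff f (m - i) = 0" if "\<not> m - n < n" using that df i False by (intro coeff_eq_0) linarith
      have "n + (m - n) - i = m - i" using False i by simp
      then show ?thesis using False i A
        by (simp add: coeff_skew_xpow_left skew_diff_right coeff_skew_xpow_right coeff_skew_const_right
            q_def r_def coeff_sum_monom R_def thp_zero)
    qed
  qed
  then have "skew_rem \<theta> n b (skew_mult \<theta> (xpow i) f) = r"
    by (intro skew_rem_eq[OF n dr])
  then show ?thesis using i l by (simp add: circulant_def r_def coeff_sum_monom R_def)
qed

end

lemma circ_dim[simp]: "dim_row (circulant \<theta> n b f) = n" "dim_col (circulant \<theta> n b f) = n"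
  by (auto simp: circulant_def)

context
  fixes \<theta> :: "'a::field \<Rightarrow> 'a"
  assumes aut: "field_automorphism \<theta>"
begin

lemma coeff_gr: assumes "degree g + k = n"
  shows "coeff (rho_r \<theta> (theta_poly \<theta> (int n) g)) m = (if m \<le> degree g then (\<theta>^^(m+k)) (coeff g (degree g - m)) else 0)"
proof -
  have dg: "degree (map_poly (\<theta>^^n) g) = degree g"
    by (rule degree_map_poly) (simp add: thp_eq0_iff[OF aut])
  have "coeff (rho_r \<theta> (theta_poly \<theta> (int n) g)) m =
     (if m \<le> degree g then theta_pow \<theta> (int m - int (degree g)) ((\<theta>^^n) (coeff g (degree g - m))) else 0)"
    by (simp add: rho_r_def theta_poly_def tp_nat[OF aut] dg coeff_sum coeff_monom sum.delta coeff_map_poly thp_zero[OF aut])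
  also have "\<dots> = (if m \<le> degree g then (\<theta>^^(m+k)) (coeff g (degree g - m)) else 0)"
    using assms by (auto simp: tp_comp[OF aut] intro!: arg_cong[where f="\<lambda>t. (\<theta>^^t) _"])
  finally show ?thesis .
qed


lemma part1:
  assumes n: "0 < n" and dk: "degree g + k = n" and g0: "coeff g 0 \<noteq> 0" and a: "a \<noteq> 0"
    and cdef: "c = a * inverse (coeff g 0) * (\<theta>^^n) (coeff g 0)"
    and G: "\<And>j. (\<theta>^^n) (coeff g j) * (\<theta>^^j) a = c * coeff g j"
  shows "transpose_mat (circulant \<theta> n a g) = circulant \<theta> n (inverse c)
     (skew_mult \<theta> (Polynomial.smult a (rho_r \<theta> (theta_poly \<theta> (int n) g))) (xpow k) - Polynomial.smult (c * coeff g 0) (xpow n - [:inverse c:]))"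
    (is "_ = circulant \<theta> n (inverse c) ?gs")
proof -
  have c0: "c \<noteq> 0" using cdef a g0 by (simp add: thp_eq0_iff[OF aut])
  have gz: "coeff g m = 0" if "m > n" for m using that dk by (intro coeff_eq_0) linarith
  have gs: "coeff ?gs m = (if m \<le> n then a * (\<theta>^^m) (coeff g (n-m)) else 0) - (if m = n then c * coeff g 0 else 0)
       + (if m = 0 then coeff g 0 else 0)" for m
  proof -
    have 1: "coeff (Polynomial.smult (c * coeff g 0) (xpow n - [:inverse c:])) m
      = (if m = n then c * coeff g 0 else 0) - (if m = 0 then coeff g 0 else 0)"
      using n c0 by (auto simp: coeff_monom coeff_const1[OF aut])
    have 2: "coeff (skew_mult \<theta> (Polynomial.smult a (rho_r \<theta> (theta_poly \<theta> (int n) g))) (xpow k)) m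
       = (if m \<le> n then a * (\<theta>^^m) (coeff g (n-m)) else 0)"
    proof (cases "k \<le> m")
      case True
      then show ?thesis using dk
        by (auto simp: coeff_skew_xpow_right[OF aut] coeff_gr[OF dk] intro!: arg_cong2[where f="\<lambda>x y. (\<theta>^^x) y"] arg_cong[where f="coeff g"])
    next
      case False
      have "coeff g (n-m) = 0" using False dk by (intro coeff_eq_0) linarith
      then show ?thesis using False
        by (auto simp: coeff_skew_xpow_right[OF aut] thp_zero[OF aut])
    qed
    show ?thesis unfolding coeff_diff 1 2 by simp
  qed
  have dg: "degree g \<le> n" using dk by simp
  have main: "transpose_mat (circulant \<theta> n a g) = circulant \<theta> n (inverse c) GS"
    if gs: "\<And>m. coeff GS m = (if m \<le> n then a * (\<theta>^^m) (coeff g (n-m)) else 0) - (if m = n then c * coeff g 0 else 0)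
       + (if m = 0 then coeff g 0 else 0)" for GS
  proof (rule eq_matI, simp_all)
    have dgs: "degree GS \<le> n"
    proof (rule degree_le, intro allI impI)
      fix m assume "n < m" then show "coeff GS m = 0" unfolding gs using n by simp
    qed
    fix i l assume i: "i < n" and l: "l < n"
    have L: "transpose_mat (circulant \<theta> n a g) $$ (i, l) = circulant \<theta> n a g $$ (l,i)"
      using i l by simp
    have eq: "(if l \<le> i then (\<theta> ^^ l) (coeff g (i - l)) else 0) + (\<theta> ^^ i) a * (\<theta> ^^ l) (coeff g (n + i - l)) =
        (if i \<le> l then (\<theta> ^^ i) (coeff GS (l - i)) else 0) + (\<theta> ^^ l) (inverse c) * (\<theta> ^^ i) (coeff GS (n + l - i))"
    proof (cases "i < l")
      case True
      then obtain j where j: "l = i + j" "0 < j" by (metis less_imp_add_positive)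
      have jn: "j < n" using j l by simp
      show "(if l \<le> i then (\<theta> ^^ l) (coeff g (i - l)) else 0) + (\<theta> ^^ i) a * (\<theta> ^^ l) (coeff g (n + i - l)) =
        (if i \<le> l then (\<theta> ^^ i) (coeff GS (l - i)) else 0) + (\<theta> ^^ l) (inverse c) * (\<theta> ^^ i) (coeff GS (n + l - i))"
        unfolding j(1) using jn j(2) by (simp add: gs thp_mult[OF aut] thp_thp[OF aut] thp_zero[OF aut])
    next
      case False
      show "(if l \<le> i then (\<theta> ^^ l) (coeff g (i - l)) else 0) + (\<theta> ^^ i) a * (\<theta> ^^ l) (coeff g (n + i - l)) =
        (if i \<le> l then (\<theta> ^^ i) (coeff GS (l - i)) else 0) + (\<theta> ^^ l) (inverse c) * (\<theta> ^^ i) (coeff GS (n + l - i))"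
      proof (cases "i = l")
        case True
        have "c * coeff g 0 = a * (\<theta>^^n) (coeff g 0)" using cdef g0 by simp
        then show ?thesis using True n by (simp add: gs thp_mult[OF aut] thp_add[OF aut] thp_zero[OF aut])
      next
        case False
        with \<open>\<not> i < l\<close> obtain j where j: "i = l + j" "0 < j" by (metis less_imp_add_positive nat_neq_iff)
        have jn: "j < n" using j i by simp
        have Gl: "(\<theta>^^(l+n)) (coeff g j) * (\<theta>^^(l+j)) a = (\<theta>^^l) c * (\<theta>^^l) (coeff g j)"
          using arg_cong[OF G[of j], of "\<theta>^^l"] by (simp add: thp_mult[OF aut] thp_thp[OF aut])
        have tc: "(\<theta>^^l) c \<noteq> 0" using c0 by (simp add: thp_eq0_iff[OF aut])
        have e: "l + j + (n - j) = l + n" using jn by simp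
        have "(\<theta> ^^ l) (inverse c) * (\<theta> ^^ i) (coeff GS (n + l - i)) = inverse ((\<theta>^^l) c) * ((\<theta>^^(l+n)) (coeff g j) * (\<theta>^^(l+j)) a)"
        proof -
          have "n + l - i = n - j" "n - j \<noteq> n" "n - j \<noteq> 0" "n - j \<le> n" "n - (n - j) = j" using j jn by auto
          then show ?thesis using j
            by (simp add: gs thp_mult[OF aut] thp_thp[OF aut] thp_inverse[OF aut] e)
        qed
        also have "\<dots> = (\<theta>^^l) (coeff g j)" using Gl tc by simp
        finally show ?thesis using j jn gz[of "n + i - l"] by (simp add: thp_zero[OF aut])
      qed
    qed
    show "circulant \<theta> n a g $$ (l, i) = circulant \<theta> n (inverse c) GS $$ (i, l)"
      unfolding circ_entry[OF aut n dg l i] circ_entry[OF aut n dgs i l] by (rule eq)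
  qed
  show ?thesis by (rule main[OF gs])
qed


lemma circ_xpow_mult:
  assumes n: "0 < n" and k: "k \<le> n" and i: "i < n" and j: "j < n"
    and B: "dim_row B = n" "dim_col B = n"
  shows "(circulant \<theta> n \<beta> (xpow k) * B) $$ (i,j) =
    (if i + k < n then B $$ (i+k, j) else (\<theta>^^(i+k-n)) \<beta> * B $$ (i+k-n, j))"
proof -
  have dx: "degree (xpow k :: 'a poly) \<le> n" using k by (simp add: degree_monom_le le_trans[OF degree_monom_le])
  have A: "circulant \<theta> n \<beta> (xpow k) $$ (i,l) = (if l = i + k then 1 else 0) + (if l + n = i + k then (\<theta>^^l) \<beta> else 0)"
    if l: "l < n" for l
    unfolding circ_entry[OF aut n dx i l] using i l
    by (auto simp: coeff_monom thp_one[OF aut] thp_zero[OF aut])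
  have "(circulant \<theta> n \<beta> (xpow k) * B) $$ (i,j) = (\<Sum>l\<in>{0..<n}. circulant \<theta> n \<beta> (xpow k) $$ (i,l) * B $$ (l,j))"
    using i j B by (simp add: scalar_prod_def)
  also have "\<dots> = (\<Sum>l\<in>{0..<n}. (if l = i + k then B $$ (l,j) else 0) + (if l = i + k - n \<and> n \<le> i + k then (\<theta>^^l) \<beta> * B $$ (l,j) else 0))"
    by (intro sum.cong refl) (auto simp: A distrib_right)
  also have "\<dots> = (if i + k < n then B $$ (i+k, j) else (\<theta>^^(i+k-n)) \<beta> * B $$ (i+k-n, j))"
    using i k by (simp add: sum.distrib sum.delta)
  finally show ?thesis .
qed


lemma part2:
  assumes n: "0 < n" and dk: "degree g + k = n" and c0: "c \<noteq> 0"
    and G: "\<And>j. (\<theta>^^n) (coeff g j) * (\<theta>^^j) a = c * coeff g j"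
  shows "circulant \<theta> n c (xpow k) * circulant \<theta> n a g =
     transpose_mat (circulant \<theta> n ((\<theta>^^k) (inverse c)) (Polynomial.smult a (rho_r \<theta> (theta_poly \<theta> (int n) g))))"
proof -
  define d where "d = degree g"
  have dk': "d + k = n" using dk d_def by simp
  have gz: "coeff g m = 0" if "m > d" for m using that d_def by (intro coeff_eq_0) simp
  have dg: "degree g \<le> n" using dk by simp
  have kn: "k \<le> n" using dk by simp
  have Gt: "(\<theta>^^(p+n)) (coeff g t) * (\<theta>^^(p+t)) a = (\<theta>^^p) c * (\<theta>^^p) (coeff g t)" for p t
    using arg_cong[OF G[of t], of "\<theta>^^p"] by (simp add: thp_mult[OF aut] thp_thp[OF aut])
  have tc: "(\<theta>^^p) c \<noteq> 0" for p using c0 by (simp add: thp_eq0_iff[OF aut])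
  have main: "circulant \<theta> n c (xpow k) * circulant \<theta> n a g = transpose_mat (circulant \<theta> n ((\<theta>^^k) (inverse c)) F)"
    if F: "\<And>m. coeff F m = (if m \<le> d then a * (\<theta>^^(m+k)) (coeff g (d-m)) else 0)" for F
  proof (rule eq_matI)
    have dF: "degree F \<le> n"
    proof (rule degree_le, intro allI impI)
      fix m assume "n < m" then show "coeff F m = 0" unfolding F using dk' by simp
    qed
    fix i j assume i0: "i < dim_row (transpose_mat (circulant \<theta> n ((\<theta>^^k) (inverse c)) F))"
      and j0: "j < dim_col (transpose_mat (circulant \<theta> n ((\<theta>^^k) (inverse c)) F))"
    have i: "i < n" and j: "j < n" using i0 j0 by auto
    have R: "circulant \<theta> n ((\<theta>^^k) (inverse c)) F $$ (j, i) =
       (if j \<le> i then (\<theta>^^j) (coeff F (i-j)) else 0) + (\<theta>^^(i+k)) (inverse c) * (\<theta>^^j) (coeff F (n+i-j))"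
      unfolding circ_entry[OF aut n dF j i] by (simp add: thp_thp[OF aut] add.commute)
    have B: "circulant \<theta> n a g $$ (l, j) = (if l \<le> j then (\<theta>^^l) (coeff g (j-l)) else 0) + (\<theta>^^j) a * (\<theta>^^l) (coeff g (n+j-l))"
      if "l < n" for l using circ_entry[OF aut n dg that j] .
    have eq: "(if i + k < n then circulant \<theta> n a g $$ (i + k, j)
          else (\<theta> ^^ (i + k - n)) c * circulant \<theta> n a g $$ (i + k - n, j)) =
         (if j \<le> i then (\<theta> ^^ j) (coeff F (i - j)) else 0) + (\<theta> ^^ (i + k)) (inverse c) * (\<theta> ^^ j) (coeff F (n + i - j))"
    proof (cases "i + k < n")
      case True
      have Bik: "circulant \<theta> n a g $$ (i + k, j) = (if i + k \<le> j then (\<theta>^^(i+k)) (coeff g (j-(i+k))) else 0) + (\<theta>^^j) a * (\<theta>^^(i+k)) (coeff g (n+j-(i+k)))"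
        using B True by simp
      have "circulant \<theta> n a g $$ (i + k, j) = (if j \<le> i then (\<theta> ^^ j) (coeff F (i - j)) else 0) + (\<theta> ^^ (i + k)) (inverse c) * (\<theta> ^^ j) (coeff F (n + i - j))"
      proof (cases "j < i + k")
        case jlt: True
        have f2: "coeff F (n + i - j) = 0" using jlt dk' F by simp
        show ?thesis
        proof (cases "j \<le> i")
          case True
          have e: "i - j \<le> d" "n + j - (i + k) = d - (i - j)" "j + (i - j + k) = i + k" using True \<open>i + k < n\<close> dk' by auto
          show ?thesis unfolding Bik f2 using True jlt e
            by (simp add: F thp_mult[OF aut] thp_thp[OF aut] thp_zero[OF aut])
        next
          case False
          have "coeff g (n + j - (i + k)) = 0" using False dk' by (intro gz) simp
          then show ?thesis unfolding Bik f2 using False jlt by (simp add: thp_zero[OF aut])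
        qed
      next
        case False
        then obtain t where t: "j = i + k + t" using le_Suc_ex[of "i+k" j] by auto
        have e: "n + i - j \<le> d" "d - (n + i - j) = t" "j + (n + i - j + k) = i + k + n" using t dk' j by auto
        have last: "(\<theta> ^^ (i + k)) (inverse c) * (\<theta> ^^ j) (coeff F (n + i - j)) = (\<theta>^^(i+k)) (coeff g t)"
        proof -
          have "(\<theta> ^^ (i + k)) (inverse c) * (\<theta> ^^ j) (coeff F (n + i - j)) =
               inverse ((\<theta>^^(i+k)) c) * ((\<theta>^^(i+k+n)) (coeff g t) * (\<theta>^^(i+k+t)) a)"
            using e t by (simp add: F thp_mult[OF aut] thp_thp[OF aut] thp_inverse[OF aut] ac_simps)
          also have "\<dots> = (\<theta>^^(i+k)) (coeff g t)" using Gt[of "i+k" t] tc[of "i+k"] by simp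
          finally show ?thesis .
        qed
        show ?thesis
        proof (cases "k = 0 \<and> t = 0")
          case True
          then show ?thesis unfolding Bik last using t dk'
            by (simp add: F thp_mult[OF aut] thp_thp[OF aut])
        next
          case False
          have "coeff g (n + j - (i + k)) = 0" using False t dk' by (intro gz) auto
          moreover have "\<not> j \<le> i" using False t by simp
          ultimately show ?thesis unfolding Bik last using t False by (auto simp: thp_zero[OF aut])
        qed
      qed
      then show "(if i + k < n then circulant \<theta> n a g $$ (i + k, j)
          else (\<theta> ^^ (i + k - n)) c * circulant \<theta> n a g $$ (i + k - n, j)) =
         (if j \<le> i then (\<theta> ^^ j) (coeff F (i - j)) else 0) + (\<theta> ^^ (i + k)) (inverse c) * (\<theta> ^^ j) (coeff F (n + i - j))"
        using True by simp
    next
      case False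
      define s where "s = i + k - n"
      have s: "i + k = n + s" "s < k" "s \<le> i" using False s_def i dk' by auto
      have f2: "coeff F (n + i - j) = 0" using F s j dk' by simp
      have Bs: "circulant \<theta> n a g $$ (s, j) = (if s \<le> j then (\<theta>^^s) (coeff g (j-s)) else 0)"
      proof -
        have "coeff g (n + j - s) = 0" using s dk' by (intro gz) simp
        then show ?thesis using B[of s] s i by (simp add: thp_zero[OF aut])
      qed
      have "(\<theta> ^^ s) c * circulant \<theta> n a g $$ (s, j) = (if j \<le> i then (\<theta> ^^ j) (coeff F (i - j)) else 0)"
      proof (cases "s \<le> j")
        case True
        then obtain t where t: "j = s + t" using le_Suc_ex[of s j] by auto
        have L: "(\<theta> ^^ s) c * circulant \<theta> n a g $$ (s, j) = (\<theta>^^j) a * (\<theta>^^(i+k)) (coeff g t)"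
          unfolding Bs using True t Gt[of s t] s(1) by (simp add: ac_simps)
        show ?thesis
        proof (cases "j \<le> i")
          case True
          have e: "i - j \<le> d" "d - (i - j) = t" "j + (i - j + k) = i + k" using True t s dk' by auto
          show ?thesis unfolding L using True e by (simp add: F thp_mult[OF aut] thp_thp[OF aut])
        next
          case False
          have "coeff g t = 0" using False t s dk' by (intro gz) simp
          then show ?thesis unfolding L using False by (simp add: thp_zero[OF aut])
        qed
      next
        case False
        have "j \<le> i" "\<not> i - j \<le> d" using False s dk' by auto
        then show ?thesis unfolding Bs using False by (simp add: F thp_zero[OF aut])
      qed
      then show "(if i + k < n then circulant \<theta> n a g $$ (i + k, j)
          else (\<theta> ^^ (i + k - n)) c * circulant \<theta> n a g $$ (i + k - n, j)) =
         (if j \<le> i then (\<theta> ^^ j) (coeff F (i - j)) else 0) + (\<theta> ^^ (i + k)) (inverse c) * (\<theta> ^^ j) (coeff F (n + i - j))"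
        using False f2 s_def by (simp add: thp_zero[OF aut])
    qed
    have T: "transpose_mat (circulant \<theta> n ((\<theta>^^k) (inverse c)) F) $$ (i, j) = circulant \<theta> n ((\<theta>^^k) (inverse c)) F $$ (j, i)"
      using i j by simp
    show "(circulant \<theta> n c (xpow k) * circulant \<theta> n a g) $$ (i, j) = transpose_mat (circulant \<theta> n ((\<theta>^^k) (inverse c)) F) $$ (i, j)"
      unfolding T circ_xpow_mult[OF n kn i j circ_dim] R by (rule eq)
  qed simp_all
  show ?thesis
    by (rule main) (simp add: coeff_gr[OF dk] d_def)
qed


lemma part3_main:
  assumes n: "0 < n" and kn: "k \<le> n" and a: "a \<noteq> 0"
    and cdef: "c = inverse ((\<theta>^^(n-k)) \<gamma>)" and c0: "c \<noteq> 0"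
    and yz: "\<And>m. m > k \<Longrightarrow> y m = 0"
    and HH: "\<And>t. (\<theta>^^(n+n)) (y t) = (\<theta>^^n) a * (\<theta>^^n) (y t) * (\<theta>^^(n+t-k)) \<gamma>"
    and HL: "\<And>m. coeff HL m = (if m \<le> k then (\<theta>^^m) (y (k-m)) else 0)"
    and HA: "\<And>m. coeff HA m = inverse a * (\<theta>^^n) (y m)"
  shows "circulant \<theta> n \<gamma> (xpow (n-k)) * circulant \<theta> n (inverse a) HL = transpose_mat (circulant \<theta> n c HA)"
proof -
  have KEY: "(\<theta>^^s) \<gamma> * (\<theta>^^j) (y t) = (\<theta>^^j) (inverse a) * (\<theta>^^(j+n)) (y t)"
    if j: "j < n" and st: "s + k = j + t" for s j t
  proof -
    have e1: "n - j + s = n + t - k" "n - j + (j + n) = n + n" "n - j + j = n" using j st kn by auto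
    have "(\<theta>^^(n-j)) ((\<theta>^^s) \<gamma> * (\<theta>^^j) (y t)) = (\<theta>^^(n-j)) ((\<theta>^^j) (inverse a) * (\<theta>^^(j+n)) (y t))"
    proof -
      have "(\<theta>^^(n-j)) ((\<theta>^^j) (inverse a) * (\<theta>^^(j+n)) (y t)) = inverse ((\<theta>^^n) a) * (\<theta>^^(n+n)) (y t)"
        by (simp add: thp_mult[OF aut] thp_thp[OF aut] e1 thp_inverse[OF aut])
      also have "\<dots> = (\<theta>^^n) (y t) * (\<theta>^^(n+t-k)) \<gamma>"
        unfolding HH using a by (simp add: thp_eq0_iff[OF aut])
      also have "\<dots> = (\<theta>^^(n-j)) ((\<theta>^^s) \<gamma> * (\<theta>^^j) (y t))"
        by (simp add: thp_mult[OF aut] thp_thp[OF aut] e1)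
      finally show ?thesis by simp
    qed
    then show ?thesis by (simp add: thp_eq_iff[OF aut])
  qed
  have dx: "degree HL \<le> n"
  proof (rule degree_le, intro allI impI)
    fix m assume "n < m" then show "coeff HL m = 0" unfolding HL using kn by simp
  qed
  have dA: "degree HA \<le> n"
  proof (rule degree_le, intro allI impI)
    fix m assume "n < m" then show "coeff HA m = 0" unfolding HA using kn yz[of m] by (simp add: thp_zero[OF aut])
  qed
  have nk: "n - k \<le> n" by simp
  show ?thesis
  proof (rule eq_matI)
    fix i j assume i0: "i < dim_row (transpose_mat (circulant \<theta> n c HA))"
      and j0: "j < dim_col (transpose_mat (circulant \<theta> n c HA))"
    have i: "i < n" and j: "j < n" using i0 j0 by auto
    have R: "circulant \<theta> n c HA $$ (j, i) =
       (if j \<le> i then (\<theta>^^j) (coeff HA (i-j)) else 0) + (\<theta>^^i) c * (\<theta>^^j) (coeff HA (n+i-j))"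
      unfolding circ_entry[OF aut n dA j i] ..
    have B: "circulant \<theta> n (inverse a) HL $$ (l, j) = (if l \<le> j then (\<theta>^^l) (coeff HL (j-l)) else 0) + (\<theta>^^j) (inverse a) * (\<theta>^^l) (coeff HL (n+j-l))"
      if "l < n" for l using circ_entry[OF aut n dx that j] .
    have eq: "(if i + (n - k) < n then circulant \<theta> n (inverse a) HL $$ (i + (n - k), j)
          else (\<theta> ^^ (i + (n - k) - n)) \<gamma> * circulant \<theta> n (inverse a) HL $$ (i + (n - k) - n, j)) =
         (if j \<le> i then (\<theta>^^j) (coeff HA (i-j)) else 0) + (\<theta>^^i) c * (\<theta>^^j) (coeff HA (n+i-j))"
    proof (cases "i < k")
      case True
      define l where "l = i + (n - k)"
      have l: "l < n" "l + k = i + n" using True kn l_def by auto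
      have T1: "(if l \<le> j then (\<theta>^^l) (coeff HL (j-l)) else 0) = (\<theta>^^i) c * (\<theta>^^j) (coeff HA (n+i-j))"
      proof (cases "l \<le> j")
        case True
        define t where "t = n + i - j"
        have e: "j - l \<le> k" "k - (j - l) = t" "l + (j - l) = j" "i + n = j + t"
          using True l j kn unfolding t_def by auto
        have K: "(\<theta>^^(i + (n - k))) \<gamma> * (\<theta>^^j) (y t) = (\<theta>^^j) (inverse a) * (\<theta>^^(j+n)) (y t)"
          using KEY[OF j, of "i + (n-k)" t] e kn by simp
        have tc: "(\<theta>^^(i + (n - k))) \<gamma> \<noteq> 0" using c0 cdef by (auto simp: thp_eq0_iff[OF aut])
        have "(\<theta>^^i) c * (\<theta>^^j) (coeff HA (n+i-j)) = inverse ((\<theta>^^(i + (n - k))) \<gamma>) * ((\<theta>^^j) (inverse a) * (\<theta>^^(j+n)) (y t))"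
          unfolding HA t_def[symmetric] cdef by (simp add: thp_mult[OF aut] thp_thp[OF aut] thp_inverse[OF aut] ac_simps)
        also have "\<dots> = (\<theta>^^j) (y t)" unfolding K[symmetric] using tc by simp
        finally show ?thesis using True e by (simp add: HL thp_thp[OF aut])
      next
        case False
        have "y (n + i - j) = 0" using False l by (intro yz) linarith
        then show ?thesis using False by (simp add: HA thp_zero[OF aut])
      qed
      have T2: "(\<theta>^^j) (inverse a) * (\<theta>^^l) (coeff HL (n+j-l)) = (if j \<le> i then (\<theta>^^j) (coeff HA (i-j)) else 0)"
      proof (cases "j \<le> i")
        case True
        have e: "n + j - l \<le> k" "k - (n + j - l) = i - j" "l + (n + j - l) = j + n" using True l j by auto
        show ?thesis using True e by (simp add: HL HA thp_mult[OF aut] thp_thp[OF aut])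
      next
        case False
        have "\<not> n + j - l \<le> k" using False l by auto
        then show ?thesis using False by (simp add: HL thp_zero[OF aut])
      qed
      have lt: "i + (n - k) < n" using True kn by simp
      show ?thesis using lt T1 T2 B[OF l(1)] unfolding l_def by (simp add: add.commute)
    next
      case False
      define s where "s = i - k"
      have s: "i + (n - k) - n = s" "s + k = i" using False kn s_def by auto
      have B0: "coeff HL (n + j - s) = 0" using s i by (simp add: HL)
      have A0: "coeff HA (n + i - j) = 0" using False j yz[of "n+i-j"] by (simp add: HA thp_zero[OF aut])
      have "(\<theta> ^^ s) \<gamma> * circulant \<theta> n (inverse a) HL $$ (s, j) = (if j \<le> i then (\<theta>^^j) (coeff HA (i-j)) else 0)"
      proof (cases "s \<le> j \<and> j \<le> i")
        case True
        define t where "t = i - j"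
        have e: "j - s \<le> k" "k - (j - s) = t" "s + (j - s) = j" "s + k = j + t" using True s unfolding t_def by auto
        have "(\<theta> ^^ s) \<gamma> * circulant \<theta> n (inverse a) HL $$ (s, j) = (\<theta> ^^ s) \<gamma> * (\<theta>^^j) (y t)"
          using B[of s] s i True e B0 by (simp add: HL thp_thp[OF aut] thp_zero[OF aut])
        also have "\<dots> = (\<theta>^^j) (inverse a) * (\<theta>^^(j+n)) (y t)" by (rule KEY[OF j e(4)])
        finally show ?thesis using True unfolding t_def by (simp add: HA thp_mult[OF aut] thp_thp[OF aut] add.commute)
      next
        case False
        show ?thesis
        proof (cases "j \<le> i")
          case True
          then have "j < s" using False by simp
          then have "y (i - j) = 0" using s by (intro yz) linarith
          then show ?thesis using B[of s] s i \<open>j < s\<close> B0 by (simp add: HA thp_zero[OF aut])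
        next
          case jgt: False
          have "\<not> j - s \<le> k" using jgt s by auto
          then show ?thesis using B[of s] s i jgt B0 by (simp add: HL thp_zero[OF aut])
        qed
      qed
      moreover have ge: "\<not> i + (n - k) < n" using False kn by simp
      ultimately show ?thesis using A0 unfolding s(1) by (simp add: thp_zero[OF aut])
    qed
    have T: "transpose_mat (circulant \<theta> n c HA) $$ (i, j) = circulant \<theta> n c HA $$ (j, i)"
      using i j by simp
    show "(circulant \<theta> n \<gamma> (xpow (n-k)) * circulant \<theta> n (inverse a) HL) $$ (i, j) = transpose_mat (circulant \<theta> n c HA) $$ (i, j)"
      unfolding T circ_xpow_mult[OF n nk i j circ_dim] R by (rule eq)
  qed simp_all
qed


lemma coeff_skew_0: "coeff (skew_mult \<theta> f g) 0 = coeff f 0 * coeff g 0"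
  by (simp add: coeff_skew[OF aut])

lemma derive_G:
  assumes n: "0 < n" and fact: "xpow n - [:a:] = skew_mult \<theta> h g" and g0: "coeff g 0 \<noteq> 0"
    and cdef: "c = a * inverse (coeff g 0) * (\<theta>^^n) (coeff g 0)"
  shows "skew_mult \<theta> (map_poly (\<theta>^^n) g) [:a:] = Polynomial.smult c g"
proof -
  define G' where "G' = map_poly (\<theta>^^n) g"
  have L1: "skew_mult \<theta> (xpow n) g = skew_mult \<theta> G' (xpow n)"
    by (rule poly_eqI) (simp add: coeff_skew_xpow_left[OF aut] coeff_skew_xpow_right[OF aut] G'_def coeff_map_poly thp_zero[OF aut])
  have xn: "xpow n = skew_mult \<theta> h g + [:a:]" using fact by (simp add: algebra_simps)
  have E: "skew_mult \<theta> (skew_mult \<theta> h g) g + Polynomial.smult a g = skew_mult \<theta> (skew_mult \<theta> G' h) g + skew_mult \<theta> G' [:a:]"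
  proof -
    have "skew_mult \<theta> (xpow n) g = skew_mult \<theta> (skew_mult \<theta> h g) g + Polynomial.smult a g"
      by (subst xn) (simp add: skew_add_left[OF aut] skew_const_left[OF aut])
    moreover have "skew_mult \<theta> G' (xpow n) = skew_mult \<theta> (skew_mult \<theta> G' h) g + skew_mult \<theta> G' [:a:]"
      by (subst xn) (simp add: skew_add_right[OF aut] skew_assoc[OF aut])
    ultimately show ?thesis using L1 by simp
  qed
  define P where "P = skew_mult \<theta> h g - skew_mult \<theta> G' h + [:a - c:]"
  define Q where "Q = skew_mult \<theta> G' [:a:] - Polynomial.smult c g"
  have PQ: "skew_mult \<theta> P g = Q"
  proof -
    have "skew_mult \<theta> P g = skew_mult \<theta> (skew_mult \<theta> h g) g - skew_mult \<theta> (skew_mult \<theta> G' h) g + Polynomial.smult (a - c) g"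
      by (simp add: P_def skew_add_left[OF aut] skew_diff_left[OF aut] skew_const_left[OF aut])
    also have "\<dots> = Q" using E unfolding Q_def by (simp add: algebra_simps smult_diff_left)
    finally show ?thesis .
  qed
  have Qc: "coeff Q m = (\<theta>^^n) (coeff g m) * (\<theta>^^m) a - c * coeff g m" for m
    by (simp add: Q_def coeff_skew_const_right[OF aut] G'_def coeff_map_poly thp_zero[OF aut])
  have Qhigh: "coeff Q m = 0" if "m > degree g" for m
    using that by (simp add: Qc coeff_eq_0 thp_zero[OF aut])
  have Q0: "coeff Q 0 = 0" using g0 by (simp add: Qc cdef)
  have "P = 0"
  proof (rule ccontr)
    assume P0: "P \<noteq> 0"
    have gnz: "g \<noteq> 0" using g0 by auto
    have "coeff Q (degree P + degree g) \<noteq> 0"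
      using P0 gnz unfolding PQ[symmetric] coeff_skew_top[OF aut] by (simp add: thp_eq0_iff[OF aut])
    then have dP: "degree P = 0" using Qhigh[of "degree P + degree g"] by (cases "degree P = 0") auto
    have "coeff P 0 * coeff g 0 = 0" using Q0 unfolding PQ[symmetric] coeff_skew_0 .
    then have "coeff P 0 = 0" using g0 by simp
    then show False using P0 dP by (metis leading_coeff_0_iff)
  qed
  then have "Q = 0" using PQ by (simp add: skew_zero_left[OF aut])
  then show ?thesis unfolding Q_def G'_def by simp
qed

lemma derive_H:
  assumes n: "0 < n" and fact: "xpow n - [:a:] = skew_mult \<theta> h g" and gnz: "g \<noteq> 0"
    and GQ: "skew_mult \<theta> (map_poly (\<theta>^^n) g) [:a:] = Polynomial.smult c g"
  shows "skew_mult \<theta> (map_poly (\<theta>^^n) h) [:c:] = Polynomial.smult ((\<theta>^^n) a) h"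
proof -
  define G' where "G' = map_poly (\<theta>^^n) g"
  define H' where "H' = map_poly (\<theta>^^n) h"
  have mapX: "map_poly (\<theta>^^n) (xpow n - [:a:]) = xpow n - [:(\<theta>^^n) a:]"
    by (rule poly_eqI) (simp add: coeff_map_poly thp_zero[OF aut] coeff_monom coeff_const1[OF aut] thp_diff[OF aut] thp_one[OF aut])
  have X': "xpow n - [:(\<theta>^^n) a:] = skew_mult \<theta> H' G'"
    using arg_cong[OF fact, of "map_poly (\<theta>^^n)"] unfolding mapX map_skew[OF aut] H'_def G'_def .
  have E1: "skew_mult \<theta> (xpow n - [:(\<theta>^^n) a:]) [:a:] = Polynomial.smult ((\<theta>^^n) a) (xpow n - [:a:])"
    using n by (intro poly_eqI) (auto simp: coeff_skew_const_right[OF aut] coeff_monom coeff_const1[OF aut] thp_one[OF aut])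
  have "skew_mult \<theta> (skew_mult \<theta> H' [:c:]) g = skew_mult \<theta> (Polynomial.smult ((\<theta>^^n) a) h) g"
  proof -
    have "skew_mult \<theta> (skew_mult \<theta> H' [:c:]) g = skew_mult \<theta> H' (Polynomial.smult c g)"
      by (simp add: skew_assoc[OF aut] skew_const_left[OF aut])
    also have "\<dots> = skew_mult \<theta> (skew_mult \<theta> H' G') [:a:]"
      using GQ by (simp add: skew_assoc[OF aut] G'_def)
    also have "\<dots> = Polynomial.smult ((\<theta>^^n) a) (skew_mult \<theta> h g)"
      unfolding X'[symmetric] E1 fact ..
    also have "\<dots> = skew_mult \<theta> (Polynomial.smult ((\<theta>^^n) a) h) g"
      by (simp add: skew_smult_left[OF aut])
    finally show ?thesis .
  qed
  then have "skew_mult \<theta> (skew_mult \<theta> H' [:c:] - Polynomial.smult ((\<theta>^^n) a) h) g = 0"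
    by (simp add: skew_diff_left[OF aut])
  then have "skew_mult \<theta> H' [:c:] - Polynomial.smult ((\<theta>^^n) a) h = 0"
    using skew_nonzero[OF aut _ gnz] by blast
  then show ?thesis unfolding H'_def by simp
qed

end

theorem theorem5p6:
  fixes \<theta> :: "'a::{finite, field} \<Rightarrow> 'a"
    and n k :: nat and a :: 'a and g h :: "'a poly"
  assumes aut: "field_automorphism \<theta>"
    and a_nz: "a \<noteq> 0"
    and fact: "xpow n - [:a:] = skew_mult \<theta> h g"
    and deg_h: "degree h = k"
  defines "c \<equiv> gamma \<theta> n a g"
    and "gr \<equiv> rho_r \<theta> (theta_poly \<theta> (int n) g)"
    and "hl \<equiv> rho_l \<theta> (theta_poly \<theta> (- int n) h)"
  shows "(transpose_mat (circulant \<theta> n a g) =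
           circulant \<theta> n (inverse c)
             (skew_mult \<theta> (Polynomial.smult a gr) (xpow k) - Polynomial.smult (c * coeff g 0) (xpow n - [:inverse c:]))) \<and>
         (circulant \<theta> n c (xpow k) * circulant \<theta> n a g =
           transpose_mat (circulant \<theta> n ((\<theta> ^^ k) (inverse c)) (Polynomial.smult a gr))) \<and>
         (circulant \<theta> n (theta_pow \<theta> (int k - int n) (inverse c)) (xpow (n - k))
           * circulant \<theta> n (inverse a) hl =
           transpose_mat (circulant \<theta> n c (Polynomial.smult (inverse a) h)))"
proof (cases "n = 0")
  case True
  then show ?thesis by (auto intro!: eq_matI)
next
  case False
  then have n: "0 < n" by simp
  have Xnz: "xpow n - [:a:] \<noteq> (0::'a poly)" using degree_X[OF aut n, of a] n by auto
  have hnz: "h \<noteq> 0" using Xnz fact by (auto simp: skew_zero_left[OF aut])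
  have gnz: "g \<noteq> 0" using Xnz fact by (auto simp: skew_zero_right[OF aut])
  have dk: "degree g + k = n"
    using degree_skew[OF aut hnz gnz] fact degree_X[OF aut n, of a] deg_h by simp
  have kn: "k \<le> n" using dk by simp
  have "coeff h 0 * coeff g 0 = - a"
    using arg_cong[OF fact, of "\<lambda>p. coeff p 0"] n by (simp add: coeff_skew_0[OF aut] coeff_monom)
  then have g0: "coeff g 0 \<noteq> 0" using a_nz by auto
  have cdef: "c = a * inverse (coeff g 0) * (\<theta>^^n) (coeff g 0)" by (simp add: c_def gamma_def)
  have c0: "c \<noteq> 0" using cdef a_nz g0 by (simp add: thp_eq0_iff[OF aut])
  have GQ: "skew_mult \<theta> (map_poly (\<theta>^^n) g) [:a:] = Polynomial.smult c g"
    by (rule derive_G[OF aut n fact g0 cdef])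
  have G: "(\<theta>^^n) (coeff g j) * (\<theta>^^j) a = c * coeff g j" for j
    using arg_cong[OF GQ, of "\<lambda>p. coeff p j"]
    by (simp add: coeff_skew_const_right[OF aut] coeff_map_poly thp_zero[OF aut])
  have HQ: "skew_mult \<theta> (map_poly (\<theta>^^n) h) [:c:] = Polynomial.smult ((\<theta>^^n) a) h"
    by (rule derive_H[OF aut n fact gnz GQ])
  have H: "(\<theta>^^n) (coeff h t) * (\<theta>^^t) c = (\<theta>^^n) a * coeff h t" for t
    using arg_cong[OF HQ, of "\<lambda>p. coeff p t"]
    by (simp add: coeff_skew_const_right[OF aut] coeff_map_poly thp_zero[OF aut])
  have P1: "transpose_mat (circulant \<theta> n a g) =
           circulant \<theta> n (inverse c)
             (skew_mult \<theta> (Polynomial.smult a gr) (xpow k) - Polynomial.smult (c * coeff g 0) (xpow n - [:inverse c:]))"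
    unfolding gr_def by (rule part1[OF aut n dk g0 a_nz cdef G])
  have P2: "circulant \<theta> n c (xpow k) * circulant \<theta> n a g =
           transpose_mat (circulant \<theta> n ((\<theta> ^^ k) (inverse c)) (Polynomial.smult a gr))"
    unfolding gr_def by (rule part2[OF aut n dk c0 G])
  define \<iota> where "\<iota> = inv_into UNIV \<theta>"
  define \<gamma> where "\<gamma> = (\<iota>^^(n-k)) (inverse c)"
  define y where "y t = (\<iota>^^n) (coeff h t)" for t
  have i0: "(\<iota>^^m) 0 = 0" for m
    using thp_invp2[OF aut, of m 0] thp_zero[OF aut, of m] unfolding \<iota>_def by simp
  have hy: "coeff h t = (\<theta>^^n) (y t)" for t unfolding y_def \<iota>_def thp_invp1[OF aut] ..
  have tg: "(\<theta>^^(n-k)) \<gamma> = inverse c" unfolding \<gamma>_def \<iota>_def thp_invp1[OF aut] ..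
  have beta: "theta_pow \<theta> (int k - int n) (inverse c) = \<gamma>"
  proof -
    have "int k - int n = - int (n - k)" using kn by simp
    then show ?thesis by (simp only: tp_neg[OF aut] \<gamma>_def \<iota>_def)
  qed
  have yz: "y m = 0" if "m > k" for m using that deg_h by (simp add: y_def coeff_eq_0 i0)
  have HH: "(\<theta>^^(n+n)) (y t) = (\<theta>^^n) a * (\<theta>^^n) (y t) * (\<theta>^^(n+t-k)) \<gamma>" for t
  proof -
    have e: "(\<theta>^^t) c = inverse ((\<theta>^^(n+t-k)) \<gamma>)"
    proof -
      have "(\<theta>^^t) c = (\<theta>^^t) (inverse ((\<theta>^^(n-k)) \<gamma>))" using tg by simp
      also have "\<dots> = inverse ((\<theta>^^(n+t-k)) \<gamma>)"
        using kn by (simp add: thp_inverse[OF aut] thp_thp[OF aut] add.commute)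
      finally show ?thesis .
    qed
    have nz: "(\<theta>^^(n+t-k)) \<gamma> \<noteq> 0" using e c0 by (auto simp: thp_eq0_iff[OF aut] thp_zero[OF aut])
    have "(\<theta>^^(n+n)) (y t) * inverse ((\<theta>^^(n+t-k)) \<gamma>) = (\<theta>^^n) a * (\<theta>^^n) (y t)"
      using H[of t] unfolding hy e by (simp add: thp_thp[OF aut])
    then show ?thesis using nz by (simp add: field_simps)
  qed
  have dmap: "degree (map_poly (\<iota>^^n) h) = k"
  proof -
    have "(\<iota>^^n) x \<noteq> 0" if "x \<noteq> 0" for x
      using that thp_invp1[OF aut, of n x] thp_zero[OF aut, of n] unfolding \<iota>_def by metis
    then show ?thesis using deg_h by (simp add: degree_map_poly)
  qed
  have HL: "coeff hl m = (if m \<le> k then (\<theta>^^m) (y (k-m)) else 0)" for m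
    unfolding hl_def rho_l_def theta_poly_def tp_neg[OF aut] \<iota>_def[symmetric] dmap
    by (simp add: coeff_sum coeff_monom sum.delta coeff_map_poly i0 y_def)
  have HA: "coeff (Polynomial.smult (inverse a) h) m = inverse a * (\<theta>^^n) (y m)" for m
    by (simp add: hy)
  have cdef': "c = inverse ((\<theta>^^(n-k)) \<gamma>)" using tg by simp
  have P3: "circulant \<theta> n (theta_pow \<theta> (int k - int n) (inverse c)) (xpow (n - k))
           * circulant \<theta> n (inverse a) hl =
           transpose_mat (circulant \<theta> n c (Polynomial.smult (inverse a) h))"
    unfolding beta by (rule part3_main[OF aut n kn a_nz cdef' c0 yz HH HL HA])
  show ?thesis using P1 P2 P3 by blast
qed

end
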